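(* Let $U\subseteq\mathbb{R}^n$ be an open set with finite Lebesgue measure and let $f:U\times\mathbb{R}^m\to\mathbb{R}$ be a normal integrand bounded from below. Let $(u_k)$ be a sequence uniformly bounded in $L^\infty(U;\mathbb{R}^m)$ generating a Young measure $\nu=\{\nu_x\}_{x\in U}$. Then $$\liminf_{k\to\infty}\operatorname*{ess\,sup}_{x\in U}f(x,u_k(x))\ge\operatorname*{ess\,sup}_{x\in U}\bar f(x),\qquad\bar f(x):=\nu_x\text{-}\operatorname*{ess\,sup}_{\xi\in\mathbb{R}^m}f(x,\xi).$$
   Context: A normal integrand is a $\mathcal{L}^n\otimes\mathcal{B}$-measurable $f:U\times\mathbb{R}^m\to\mathbb{R}$ with $f(x,\cdot)$ lower semicontinuous for a.e. $x$. A family $\{\nu_x\}_{x\in U}$ of Borel probability measures on $\mathbb{R}^m$ is the Young measure generated by a bounded sequence $(u_k)$ in $L^\infty$ if it is weakly* measurable, the $\nu_x$ are supported in a common compact set, and for every Carathéodory $g$ with $(g(\cdot,u_k))$ bounded and equi-integrable in $L^1$, $g(\cdot,u_k)\rightharpoonup\int g(\cdot,\xi)\,d\nu_{(\cdot)}(\xi)$ weakly in $L^1$. $\nu_x\text{-}\operatorname{ess\,sup}$ denotes the essential supremum with respect to $\nu_x$. *)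

theory Defs
  imports "HOL-Analysis.Analysis" "HOL-Probability.Probability_Measure"
begin

definition ess_sup :: "'a measure \<Rightarrow> ('a \<Rightarrow> ereal) \<Rightarrow> ereal" where
  "ess_sup M g = Inf {z. AE x in M. g x \<le> z}"

definition lsc :: "('b::topological_space \<Rightarrow> real) \<Rightarrow> bool" where
  "lsc g \<longleftrightarrow> (\<forall>\<xi> c. c < g \<xi> \<longrightarrow> eventually (\<lambda>\<eta>. c < g \<eta>) (at \<xi>))"

definition normal_integrand ::
  "'a::euclidean_space set \<Rightarrow> ('a \<Rightarrow> 'b::euclidean_space \<Rightarrow> real) \<Rightarrow> bool" where
  "normal_integrand U f \<longleftrightarrow>
     (\<lambda>(x,\<xi>). f x \<xi>) \<in> borel_measurable (lebesgue_on U \<Otimes>\<^sub>M (borel :: 'b measure)) \<and>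
     (AE x in lebesgue_on U. lsc (f x))"

definition caratheodory ::
  "'a::euclidean_space set \<Rightarrow> ('a \<Rightarrow> 'b::euclidean_space \<Rightarrow> real) \<Rightarrow> bool" where
  "caratheodory U g \<longleftrightarrow>
     (\<forall>\<xi>. (\<lambda>x. g x \<xi>) \<in> borel_measurable (lebesgue_on U)) \<and>
     (AE x in lebesgue_on U. continuous_on UNIV (g x))"

definition bounded_equiintegrable ::
  "'a::euclidean_space set \<Rightarrow> (nat \<Rightarrow> 'a \<Rightarrow> real) \<Rightarrow> bool" where
  "bounded_equiintegrable U h \<longleftrightarrow>
     (\<forall>k. integrable (lebesgue_on U) (h k)) \<and>
     (\<exists>C. \<forall>k. (\<integral>x. \<bar>h k x\<bar> \<partial>lebesgue_on U) \<le> C) \<and>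
     (\<forall>\<epsilon>>0. \<exists>\<delta>>0. \<forall>A \<in> sets (lebesgue_on U). measure (lebesgue_on U) A < \<delta> \<longrightarrow>
        (\<forall>k. (\<integral>x\<in>A. \<bar>h k x\<bar> \<partial>lebesgue_on U) < \<epsilon>))"

definition weak_L1_conv ::
  "'a::euclidean_space set \<Rightarrow> (nat \<Rightarrow> 'a \<Rightarrow> real) \<Rightarrow> ('a \<Rightarrow> real) \<Rightarrow> bool" where
  "weak_L1_conv U h h0 \<longleftrightarrow>
     integrable (lebesgue_on U) h0 \<and>
     (\<forall>\<phi> \<in> borel_measurable (lebesgue_on U).
        (\<exists>B. AE x in lebesgue_on U. \<bar>\<phi> x\<bar> \<le> B) \<longrightarrow>
        (\<lambda>k. \<integral>x. h k x * \<phi> x \<partial>lebesgue_on U) \<longlonglongrightarrow> (\<integral>x. h0 x * \<phi> x \<partial>lebesgue_on U))"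

definition generates_young_measure ::
  "'a::euclidean_space set \<Rightarrow> (nat \<Rightarrow> 'a \<Rightarrow> 'b::euclidean_space) \<Rightarrow> ('a \<Rightarrow> 'b measure) \<Rightarrow> bool" where
  "generates_young_measure U u \<nu> \<longleftrightarrow>
     (\<forall>x\<in>U. prob_space (\<nu> x) \<and> sets (\<nu> x) = sets (borel :: 'b measure)) \<and>
     \<comment> \<open>weak* measurability: testing against C_0(R^m)\<close>
     (\<forall>\<phi> :: 'b \<Rightarrow> real. continuous_on UNIV \<phi> \<and> (\<phi> \<longlongrightarrow> 0) at_infinity \<longrightarrow>
        (\<lambda>x. \<integral>\<xi>. \<phi> \<xi> \<partial>\<nu> x) \<in> borel_measurable (lebesgue_on U)) \<and>
     \<comment> \<open>supported in a common compact set\<close>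
     (\<exists>K. compact K \<and> (\<forall>x\<in>U. measure (\<nu> x) (UNIV - K) = 0)) \<and>
     \<comment> \<open>representation of weak L^1 limits of Caratheodory compositions\<close>
     (\<forall>g. caratheodory U g \<and> bounded_equiintegrable U (\<lambda>k x. g x (u k x)) \<longrightarrow>
        weak_L1_conv U (\<lambda>k x. g x (u k x)) (\<lambda>x. \<integral>\<xi>. g x \<xi> \<partial>\<nu> x))"

end

theory Submission
  imports Defs
begin

lemma lsc_open: fixes g :: "'b::topological_space \<Rightarrow> real"
  assumes A: "\<forall>\<xi> c. c < g \<xi> \<longrightarrow> eventually (\<lambda>\<eta>. c < g \<eta>) (at \<xi>)"
  shows "open {\<xi>. t < g \<xi>}"
proof (rule open_subopen[THEN iffD2], rule ballI)
  fix \<xi> assume "\<xi> \<in> {\<xi>. t < g \<xi>}"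
  then have lt: "t < g \<xi>" by simp
  have ev: "eventually (\<lambda>\<eta>. t < g \<eta>) (at \<xi>)" using A[rule_format, OF lt] .
  have "eventually (\<lambda>\<eta>. t < g \<eta>) (nhds \<xi>)"
    using ev lt by (simp only: eventually_nhds_conv_at)
  then obtain S where S: "open S" "\<xi> \<in> S" "\<forall>x\<in>S. t < g x" unfolding eventually_nhds by (elim exE conjE)
  have "S \<subseteq> {\<xi>. t < g \<xi>}" using S(3) by (intro subsetI) simp
  then show "\<exists>T. open T \<and> \<xi> \<in> T \<and> T \<subseteq> {\<xi>. t < g \<xi>}" using S(1,2) by (intro exI conjI)
qed

lemma cover_null:
  fixes W :: "'b::euclidean_space set" and D :: "'b set"
  assumes "open W" and cD0: "countable D" and M: "sets M = sets borel"
    and D: "\<And>X. open X \<Longrightarrow> X \<noteq> {} \<Longrightarrow> \<exists>d\<in>D. d \<in> X"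
    and null: "\<And>c n. c \<in> D \<Longrightarrow> cball c (2 / Suc n) \<subseteq> W \<Longrightarrow> emeasure M (ball c (1 / Suc n)) = 0"
  shows "emeasure M W = 0"
proof -
  have sub: "W \<subseteq> (\<Union>(c,n)\<in>D \<times> UNIV. if cball c (2 / Suc n) \<subseteq> W then ball c (1 / Suc n) else {})"
  proof
    fix \<xi> assume "\<xi> \<in> W"
    then obtain e where e: "e > 0" "ball \<xi> e \<subseteq> W" using \<open>open W\<close> open_contains_ball by blast
    obtain n :: nat where n0: "inverse (real (Suc n)) < e / 4"
      using reals_Archimedean[of "e/4"] e(1) by auto
    then have n: "1 / real (Suc n) < e / 4" by (simp add: inverse_eq_divide)
    define r where "r = 1 / real (Suc n)"
    have r: "r > 0" unfolding r_def by simp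
    obtain d where d: "d \<in> D" "d \<in> ball \<xi> r" using D[of "ball \<xi> r"] r by auto
    have "cball d (2 / Suc n) \<subseteq> W"
    proof
      fix y assume "y \<in> cball d (2 / Suc n)"
      then have "dist d y \<le> 2 * r" by (simp add: r_def)
      moreover have "dist \<xi> d < r" using d by simp
      ultimately have "dist \<xi> y < e" using n e(1) dist_triangle[of \<xi> y d] unfolding r_def by linarith
      then show "y \<in> W" using e by auto
    qed
    moreover have "\<xi> \<in> ball d (1 / Suc n)" using d by (simp add: r_def dist_commute)
    ultimately show "\<xi> \<in> (\<Union>(c,n)\<in>D \<times> UNIV. if cball c (2 / Suc n) \<subseteq> W then ball c (1 / Suc n) else {})"
      using d(1) by (intro UN_I[of "(d,n)"]) auto
  qed
  have cD: "countable (D \<times> (UNIV::nat set))" using cD0 by simp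
  have "(\<Union>(c,n)\<in>D \<times> UNIV. if cball c (2 / Suc n) \<subseteq> W then ball c (1 / Suc n) else {}) \<in> null_sets M"
    apply (rule null_sets_UN')
    using cD apply simp
    subgoal for i
      using null[of "fst i" "snd i"] M by (cases i) (simp add: null_sets_def)
    done
  moreover have "W \<in> sets M" using M \<open>open W\<close> by simp
  ultimately have "W \<in> null_sets M" using sub by (rule null_sets_subset)
  then show ?thesis by (rule null_setsD1)
qed

theorem mainTheorem18:
  fixes U :: "'a::euclidean_space set"
    and f :: "'a \<Rightarrow> 'b::euclidean_space \<Rightarrow> real"
    and u :: "nat \<Rightarrow> 'a \<Rightarrow> 'b"
    and \<nu> :: "'a \<Rightarrow> 'b measure"
  assumes "open U"
    and "emeasure lebesgue U < \<infinity>"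
    and "normal_integrand U f"
    and "\<exists>c. \<forall>x\<in>U. \<forall>\<xi>. c \<le> f x \<xi>"
    and "\<forall>k. u k \<in> borel_measurable (lebesgue_on U)"
    and "\<exists>M. \<forall>k. AE x in lebesgue_on U. norm (u k x) \<le> M"
    and "generates_young_measure U u \<nu>"
  shows "liminf (\<lambda>k. ess_sup (lebesgue_on U) (\<lambda>x. ereal (f x (u k x))))
           \<ge> ess_sup (lebesgue_on U) (\<lambda>x. ess_sup (\<nu> x) (\<lambda>\<xi>. ereal (f x \<xi>)))"
proof (rule ccontr)
  let ?M = "lebesgue_on U"
  let ?S = "\<lambda>k. ess_sup ?M (\<lambda>x. ereal (f x (u k x)))"
  let ?fb = "\<lambda>x. ess_sup (\<nu> x) (\<lambda>\<xi>. ereal (f x \<xi>))"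
  have Usets: "U \<in> sets lebesgue" using assms(1) by simp
  have spM: "space ?M = U" using Usets by simp
  have fin: "finite_measure ?M"
    apply (rule finite_measureI)
    using assms(2) Usets by (simp add: emeasure_restrict_space spM)
  have um: "\<And>k. u k \<in> borel_measurable ?M" using assms(5) by simp
  have Y1': "\<forall>x\<in>U. prob_space (\<nu> x) \<and> sets (\<nu> x) = sets (borel :: 'b measure)"
    using assms(7)[unfolded generates_young_measure_def, THEN conjunct1] .
  have Y4': "\<forall>g. caratheodory U g \<and> bounded_equiintegrable U (\<lambda>k x. g x (u k x)) \<longrightarrow>
        weak_L1_conv U (\<lambda>k x. g x (u k x)) (\<lambda>x. \<integral>\<xi>. g x \<xi> \<partial>\<nu> x)"
    using assms(7)[unfolded generates_young_measure_def, THEN conjunct2, THEN conjunct2, THEN conjunct2] .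
  have Y1: "\<And>x. x \<in> U \<Longrightarrow> prob_space (\<nu> x) \<and> sets (\<nu> x) = sets (borel :: 'b measure)"
    using Y1' by (rule bspec)
  have Y4: "\<And>g. caratheodory U g \<and> bounded_equiintegrable U (\<lambda>k x. g x (u k x)) \<Longrightarrow>
        weak_L1_conv U (\<lambda>k x. g x (u k x)) (\<lambda>x. \<integral>\<xi>. g x \<xi> \<partial>\<nu> x)"
    using Y4' by (rule allE) (rule mp)
  have lscAE: "AE x in ?M. lsc (f x)" using assms(3)[unfolded normal_integrand_def, THEN conjunct2] .
  assume "\<not> ?thesis"
  then have "liminf ?S < ess_sup ?M ?fb" by simp
  then obtain t where t1: "liminf ?S < ereal t" and t2: "ereal t < ess_sup ?M ?fb"
    using ereal_dense2 by blast
  have freq: "frequently (\<lambda>k. AE x in ?M. f x (u k x) < t) sequentially"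
  proof -
    from t1 have "\<not> (ereal t \<le> liminf ?S)" by simp
    then obtain y where y: "y < ereal t" "\<not> eventually (\<lambda>k. y < ?S k) sequentially"
      unfolding le_Liminf_iff by blast
    show ?thesis
      unfolding frequently_def
    proof
      assume ev: "eventually (\<lambda>k. \<not> (AE x in ?M. f x (u k x) < t)) sequentially"
      have "eventually (\<lambda>k. y < ?S k) sequentially"
        using ev
      proof (rule eventually_mono)
        fix k assume nAE: "\<not> (AE x in ?M. f x (u k x) < t)"
        show "y < ?S k"
        proof (rule ccontr)
          assume "\<not> y < ?S k"
          then have "?S k < ereal t" using y(1) by auto
          then obtain z where z: "AE x in ?M. ereal (f x (u k x)) \<le> z" "z < ereal t"
            unfolding ess_sup_def Inf_less_iff by blast
          from z(1) have "AE x in ?M. f x (u k x) < t"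
          proof (rule eventually_mono)
            fix x assume "ereal (f x (u k x)) \<le> z"
            then have "ereal (f x (u k x)) < ereal t" using z(2) by (rule le_less_trans)
            then show "f x (u k x) < t" by simp
          qed
          with nAE show False by simp
        qed
      qed
      with y(2) show False by simp
    qed
  qed
  have nAE: "\<not> (AE x in ?M. ?fb x \<le> ereal t)"
  proof
    assume "AE x in ?M. ?fb x \<le> ereal t"
    then have "ess_sup ?M ?fb \<le> ereal t" unfolding ess_sup_def by (auto intro: Inf_lower)
    with t2 show False by simp
  qed
  obtain D :: "'b set" where cD0: "countable D" and D: "\<And>X. open X \<Longrightarrow> X \<noteq> {} \<Longrightarrow> \<exists>d\<in>D. d \<in> X"
    using countable_dense_exists by blast
  define Q where "Q c n x \<longleftrightarrow> lsc (f x) \<and> cball c (2 / Suc n) \<subseteq> {\<xi>. t < f x \<xi>}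
      \<and> emeasure (\<nu> x) (ball c (1 / Suc n)) \<noteq> 0" for c and n :: nat and x
  obtain c n where cD: "c \<in> D" and nQ: "\<not> (AE x in ?M. \<not> Q c n x)"
  proof -
    have "\<not> (\<forall>p\<in>D \<times> UNIV. AE x in ?M. \<not> Q (fst p) (snd p) x)"
    proof
      assume "\<forall>p\<in>D \<times> UNIV. AE x in ?M. \<not> Q (fst p) (snd p) x"
      then have "AE x in ?M. \<forall>p\<in>D \<times> UNIV. \<not> Q (fst p) (snd p) x"
        using cD0 by (subst AE_ball_countable) auto
      then have "AE x in ?M. (\<forall>p\<in>D \<times> UNIV. \<not> Q (fst p) (snd p) x) \<and> lsc (f x)"
        using lscAE by (rule AE_conjI)
      then have "AE x in ?M. ?fb x \<le> ereal t"
      proof (rule lebesgue_on_mono)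
        fix x assume H: "(\<forall>p\<in>D \<times> UNIV. \<not> Q (fst p) (snd p) x) \<and> lsc (f x)" and xU: "x \<in> U"
        have ps: "prob_space (\<nu> x)" and sx: "sets (\<nu> x) = sets borel" using Y1[OF xU] by auto
        have op: "open {\<xi>. t < f x \<xi>}"
          by (rule lsc_open) (use H in \<open>simp add: lsc_def\<close>)
        have "emeasure (\<nu> x) {\<xi>. t < f x \<xi>} = 0"
        proof (rule cover_null[OF op cD0 sx D])
          fix c' n' assume "c' \<in> D" "cball c' (2 / real (Suc n')) \<subseteq> {\<xi>. t < f x \<xi>}"
          then show "emeasure (\<nu> x) (ball c' (1 / real (Suc n'))) = 0"
            using H unfolding Q_def by fastforce
        qed auto
        moreover have "{\<xi>. t < f x \<xi>} \<in> sets (\<nu> x)" using sx op by simp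
        ultimately have nul: "{\<xi>. t < f x \<xi>} \<in> null_sets (\<nu> x)" by (simp add: null_sets_def)
        have "AE \<xi> in \<nu> x. ereal (f x \<xi>) \<le> ereal t"
          by (rule AE_I'[OF nul]) auto
        then show "?fb x \<le> ereal t" unfolding ess_sup_def by (auto intro: Inf_lower)
      qed
      with nAE show False by simp
    qed
    then obtain p where "p \<in> D \<times> UNIV" "\<not> (AE x in ?M. \<not> Q (fst p) (snd p) x)" by blast
    then show ?thesis using that[of "fst p" "snd p"] by auto
  qed

  define r :: real where "r = 1 / real (Suc n)"
  have r: "r > 0" unfolding r_def by simp
  define \<phi> :: "'b \<Rightarrow> real" where "\<phi> \<xi> = max 0 (min 1 (2 - dist \<xi> c / r))" for \<xi>
  have \<phi>01: "0 \<le> \<phi> \<xi>" "\<phi> \<xi> \<le> 1" for \<xi> unfolding \<phi>_def by auto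
  have \<phi>cont: "continuous_on UNIV \<phi>" unfolding \<phi>_def using r by (intro continuous_intros) auto
  have \<phi>pos: "dist \<xi> c \<le> 2 * r" if "0 < \<phi> \<xi>" for \<xi>
  proof -
    from that have "0 < 2 - dist \<xi> c / r" unfolding \<phi>_def by auto
    then show ?thesis using r by (simp add: field_simps)
  qed
  have \<phi>one: "\<phi> \<xi> = 1" if "dist \<xi> c < r" for \<xi>
  proof -
    from that r have "dist \<xi> c / r < 1" by (simp add: field_simps)
    then show ?thesis unfolding \<phi>_def by auto
  qed
  have \<phi>bm: "\<phi> \<in> borel_measurable borel" by (rule borel_measurable_continuous_onI[OF \<phi>cont])
  have \<phi>um: "(\<lambda>x. \<phi> (u k x)) \<in> borel_measurable ?M" for k
    using measurable_compose[OF um \<phi>bm] by (simp add: comp_def)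
  have carat: "caratheodory U (\<lambda>x \<xi>. \<phi> \<xi>)"
    unfolding caratheodory_def using \<phi>cont by simp
  have intk: "integrable ?M (\<lambda>x. \<phi> (u k x))" for k
    by (rule finite_measure.integrable_const_bound[OF fin, where B=1]) (use \<phi>01 \<phi>um in auto)
  have beq: "bounded_equiintegrable U (\<lambda>k x. \<phi> (u k x))"
    unfolding bounded_equiintegrable_def
  proof (intro conjI)
    show "\<forall>k. integrable ?M (\<lambda>x. \<phi> (u k x))" using intk by blast
    have ic: "integrable ?M (\<lambda>x. 1::real)" using fin finite_measure.integrable_const by blast
    show "\<exists>C. \<forall>k. (\<integral>x. \<bar>\<phi> (u k x)\<bar> \<partial>?M) \<le> C"
    proof (intro exI allI)
      fix k
      show "(\<integral>x. \<bar>\<phi> (u k x)\<bar> \<partial>?M) \<le> (\<integral>x. 1 \<partial>?M)"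
        by (rule integral_mono) (use intk ic \<phi>01 in auto)
    qed
    show "\<forall>\<epsilon>>0. \<exists>\<delta>>0. \<forall>A \<in> sets ?M. measure ?M A < \<delta> \<longrightarrow>
        (\<forall>k. (\<integral>x\<in>A. \<bar>\<phi> (u k x)\<bar> \<partial>?M) < \<epsilon>)"
    proof (intro allI impI)
      fix \<epsilon> :: real assume e: "\<epsilon> > 0"
      show "\<exists>\<delta>>0. \<forall>A \<in> sets ?M. measure ?M A < \<delta> \<longrightarrow>
        (\<forall>k. (\<integral>x\<in>A. \<bar>\<phi> (u k x)\<bar> \<partial>?M) < \<epsilon>)"
      proof (intro exI[of _ \<epsilon>] conjI e ballI impI allI)
      fix A k assume A: "A \<in> sets ?M" and mA: "measure ?M A < \<epsilon>"
      have iA: "integrable ?M (indicator A :: _ \<Rightarrow> real)"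
        using A fin sets.sets_into_space[OF A] by (auto simp: integrable_indicator_iff Int_absorb2 finite_measure.emeasure_finite less_top[symmetric])
      have "(\<integral>x\<in>A. \<bar>\<phi> (u k x)\<bar> \<partial>?M) \<le> (\<integral>x. indicator A x \<partial>?M)"
        unfolding set_lebesgue_integral_def
        apply (rule integral_mono)
        subgoal using intk[of k] A by (intro integrable_mult_indicator) auto
        subgoal by (rule iA)
        subgoal for x using \<phi>01[of "u k x"] by (auto simp: indicator_def)
        done
      also have "\<dots> = measure ?M A" using A sets.sets_into_space[OF A] by (simp add: Int_absorb2)
      finally show "(\<integral>x\<in>A. \<bar>\<phi> (u k x)\<bar> \<partial>?M) < \<epsilon>" using mA by linarith
    qed
    qed
  qed
  define h where "h x = (\<integral>\<xi>. \<phi> \<xi> \<partial>\<nu> x)" for x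
  have wc: "weak_L1_conv U (\<lambda>k x. \<phi> (u k x)) h"
    using Y4[of "\<lambda>x \<xi>. \<phi> \<xi>"] carat beq unfolding h_def by simp
  then have hint: "integrable ?M h" unfolding weak_L1_conv_def by blast
  then have hbm: "h \<in> borel_measurable ?M" by blast
  define K where "K = {k. AE x in ?M. f x (u k x) < t}"
  define E where "E = {x \<in> space ?M. 0 < h x \<and> (\<forall>k\<in>K. \<phi> (u k x) \<le> 0)}"
  have Esets: "E \<in> sets ?M"
  proof -
    have A0: "{x \<in> space ?M. 0 < h x} \<in> sets ?M"
      using hbm unfolding borel_measurable_iff_greater by blast
    have B: "{x \<in> space ?M. \<phi> (u k x) \<le> 0} \<in> sets ?M" for k
      using \<phi>um[of k] unfolding borel_measurable_iff_le by blast
    have eq: "E = {x \<in> space ?M. 0 < h x} \<inter> (\<Inter>k\<in>K. {x \<in> space ?M. \<phi> (u k x) \<le> 0})"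
      unfolding E_def by blast
    show ?thesis
    proof (cases "K = {}")
      case True
      then show ?thesis using A0 eq by simp
    next
      case False
      then have "(\<Inter>k\<in>K. {x \<in> space ?M. \<phi> (u k x) \<le> 0}) \<in> sets ?M"
        using B by (intro sets.countable_INT) auto
      then show ?thesis using A0 eq by simp
    qed
  qed
  have AEK: "AE x in ?M. \<forall>k\<in>K. f x (u k x) < t"
    by (rule AE_ball_countable') (auto simp: K_def)
  have "AE x in ?M. Q c n x \<longrightarrow> x \<in> E"
    using AEK
  proof (rule lebesgue_on_mono)
    fix x assume fk: "\<forall>k\<in>K. f x (u k x) < t" and xU: "x \<in> U"
    show "Q c n x \<longrightarrow> x \<in> E"
    proof
      assume q: "Q c n x"
      have ps: "prob_space (\<nu> x)" and sx: "sets (\<nu> x) = sets borel" using Y1[OF xU] by auto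
      have bs: "ball c r \<in> sets (\<nu> x)" using sx by simp
      have "emeasure (\<nu> x) (ball c r) \<noteq> 0" using q unfolding Q_def r_def by simp
      then have mpos: "measure (\<nu> x) (ball c r) > 0"
        using ps by (simp add: zero_less_measure_iff prob_space_def finite_measure.emeasure_eq_measure)
      have phm: "\<phi> \<in> borel_measurable (\<nu> x)" by (subst measurable_cong_sets[OF sx refl]) (rule \<phi>bm)
      have iphi: "integrable (\<nu> x) \<phi>"
        by (rule finite_measure.integrable_const_bound[where B=1])
           (use ps phm \<phi>01 in \<open>auto simp: prob_space_def\<close>)
      have iind: "integrable (\<nu> x) (indicator (ball c r) :: _ \<Rightarrow> real)"
        using bs ps sets.sets_into_space[OF bs] by (auto simp: integrable_indicator_iff Int_absorb2 prob_space_def finite_measure.emeasure_finite less_top[symmetric])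
      have "measure (\<nu> x) (ball c r) = (\<integral>\<xi>. indicator (ball c r) \<xi> \<partial>\<nu> x)"
        using bs sets.sets_into_space[OF bs] by (simp add: Int_absorb2)
      also have "\<dots> \<le> h x" unfolding h_def
        apply (rule integral_mono[OF iind iphi])
        subgoal for \<xi> using \<phi>one[of \<xi>] \<phi>01[of \<xi>] by (auto simp: indicator_def dist_commute)
        done
      finally have hpos: "0 < h x" using mpos by linarith
      have "\<phi> (u k x) \<le> 0" if "k \<in> K" for k
      proof (rule ccontr)
        assume "\<not> \<phi> (u k x) \<le> 0"
        then have "dist (u k x) c \<le> 2 * r" using \<phi>pos by simp
        then have "u k x \<in> cball c (2 / Suc n)" by (simp add: r_def dist_commute)
        then have "t < f x (u k x)" using q unfolding Q_def by auto
        with fk that show False by auto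
      qed
      then show "x \<in> E" unfolding E_def using hpos xU spM by auto
    qed
  qed
  have Enn: "\<not> (AE x in ?M. x \<notin> E)"
  proof
    assume "AE x in ?M. x \<notin> E"
    with \<open>AE x in ?M. Q c n x \<longrightarrow> x \<in> E\<close> have "AE x in ?M. \<not> Q c n x" by eventually_elim auto
    with nQ show False by simp
  qed
  have iE: "integrable ?M (\<lambda>x. h x * indicator E x)"
    by (rule integrable_real_mult_indicator[OF Esets hint])
  have lim: "(\<lambda>k. \<integral>x. \<phi> (u k x) * indicator E x \<partial>?M) \<longlonglongrightarrow> (\<integral>x. h x * indicator E x \<partial>?M)"
  proof -
    have ind: "(indicator E :: _ \<Rightarrow> real) \<in> borel_measurable ?M" using Esets by simp
    have bnd: "\<exists>B. AE x in ?M. \<bar>(indicator E x :: real)\<bar> \<le> B"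
      by (intro exI[of _ 1] AE_I2) (auto simp: indicator_def)
    from wc have "\<forall>\<psi>\<in>borel_measurable ?M. (\<exists>B. AE x in ?M. \<bar>\<psi> x\<bar> \<le> B) \<longrightarrow>
        (\<lambda>k. \<integral>x. \<phi> (u k x) * \<psi> x \<partial>?M) \<longlonglongrightarrow> (\<integral>x. h x * \<psi> x \<partial>?M)"
      unfolding weak_L1_conv_def by blast
    then show ?thesis using ind bnd by blast
  qed
  have zero: "(\<integral>x. \<phi> (u k x) * indicator E x \<partial>?M) = 0" if "k \<in> K" for k
  proof -
    have "(\<lambda>x. \<phi> (u k x) * indicator E x) = (\<lambda>x. 0)"
    proof
      fix x show "\<phi> (u k x) * indicator E x = 0"
      proof (cases "x \<in> E")
        case True
        then have "\<phi> (u k x) \<le> 0" using that unfolding E_def by auto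
        then show ?thesis using \<phi>01[of "u k x"] by simp
      qed simp
    qed
    then show ?thesis by simp
  qed
  have L0: "(\<integral>x. h x * indicator E x \<partial>?M) = 0"
  proof (rule ccontr)
    assume "(\<integral>x. h x * indicator E x \<partial>?M) \<noteq> 0"
    from tendsto_imp_eventually_ne[OF lim this]
    have ev: "eventually (\<lambda>k. (\<integral>x. \<phi> (u k x) * indicator E x \<partial>?M) \<noteq> 0) sequentially" .
    have fr: "frequently (\<lambda>k. k \<in> K) sequentially" using freq by (simp add: K_def)
    have "frequently (\<lambda>k. False) sequentially"
      using frequently_eventually_conj[OF fr ev]
      by (rule frequently_elim1) (use zero in blast)
    then show False by simp
  qed
  have nn: "AE x in ?M. 0 \<le> h x * indicator E x"
    by (rule AE_I2) (auto simp: E_def indicator_def)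
  have "AE x in ?M. h x * indicator E x = 0"
    using integral_nonneg_eq_0_iff_AE[OF iE nn] L0 by simp
  then have "AE x in ?M. x \<notin> E"
    by (rule eventually_mono) (auto simp: E_def indicator_def split: if_splits)
  with Enn show False by simp
qed

end
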